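(* For every $d\ge 1$ and $\varepsilon\le\frac{1}{d+1}$, every algorithm for robust mean estimation of $d$-dimensional distributions with covariance $\Sigma\preceq\sigma^2 I$ in the population limit has, on some input, error \[ \mathbb{E}[\|\widehat{\mu}-\mu\|] \ge JUNG_d\cdot\sqrt{2\sigma^2\varepsilon}. \]
   Context: $JUNG_d := \sqrt{\frac{2d}{d+1}}$. Robust mean estimation in the population limit: there is an unknown true distribution $D$ on $\mathbb{R}^d$ with mean $\mu$ and covariance $\Sigma\preceq\sigma^2 I$; an adversary replaces it by any distribution $D'$ with total variation distance $TV(D,D')\le\varepsilon$. The (possibly randomized) algorithm is given $\varepsilon$, $\sigma^2$ and the distribution $D'$ itself, and outputs $\widehat{\mu}\in\mathbb{R}^d$; its error is $\mathbb{E}\|\widehat{\mu}-\mu\|$ over the algorithm's randomness. "On some input" means there exist $\sigma$, such a $D$ and such a $D'$ for which the stated lower bound holds. *)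

theory Defs
  imports "HOL-Probability.Probability"
begin

definition jung_const :: "nat \<Rightarrow> real" where
  "jung_const d = sqrt (2 * real d / (real d + 1))"

definition is_distribution :: "(real ^ 'n) measure \<Rightarrow> bool" where
  "is_distribution M \<longleftrightarrow> prob_space M \<and> sets M = sets borel"

definition tv_dist :: "(real ^ 'n) measure \<Rightarrow> (real ^ 'n) measure \<Rightarrow> real" where
  "tv_dist M N = (SUP A \<in> sets borel. \<bar>measure M A - measure N A\<bar>)"

definition dist_mean :: "(real ^ 'n) measure \<Rightarrow> real ^ 'n" where
  "dist_mean M = (\<integral>x. x \<partial>M)"

definition dist_cov :: "(real ^ 'n) measure \<Rightarrow> real ^ 'n ^ 'n" where
  "dist_cov M = (\<chi> i j. \<integral>x. (x $ i - dist_mean M $ i) * (x $ j - dist_mean M $ j) \<partial>M)"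

definition loewner_le :: "real ^ 'n ^ 'n \<Rightarrow> real ^ 'n ^ 'n \<Rightarrow> bool" where
  "loewner_le A B \<longleftrightarrow> (\<forall>v. v \<bullet> (A *v v) \<le> v \<bullet> (B *v v))"

definition bounded_cov :: "real \<Rightarrow> (real ^ 'n) measure \<Rightarrow> bool" where
  "bounded_cov \<sigma> D \<longleftrightarrow> is_distribution D \<and> integrable D (\<lambda>x. x) \<and>
     integrable D (\<lambda>x. (norm x)\<^sup>2) \<and> loewner_le (dist_cov D) ((\<sigma>\<^sup>2) *\<^sub>R mat 1)"

text \<open>A (randomized) population-limit algorithm maps (\<epsilon>, \<sigma>^2, D') to the distribution
  of its output; its error is E||\<mu>hat - \<mu>||.\<close>
definition alg_error ::
  "(real \<Rightarrow> real \<Rightarrow> (real ^ 'n) measure \<Rightarrow> (real ^ 'n) measure) \<Rightarrow> real \<Rightarrow> real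
     \<Rightarrow> (real ^ 'n) measure \<Rightarrow> real ^ 'n \<Rightarrow> ennreal" where
  "alg_error A \<epsilon> \<sigma> D' \<mu> = (\<integral>\<^sup>+ y. ennreal (norm (y - \<mu>)) \<partial>(A \<epsilon> (\<sigma>\<^sup>2) D'))"

end

theory Submission
  imports Defs
begin


definition fdist :: "('k::finite \<Rightarrow> real) \<Rightarrow> ('k \<Rightarrow> real ^ 'n) \<Rightarrow> (real ^ 'n) measure" where
  "fdist w x = distr (measure_pmf (embed_pmf w)) borel x"

definition wok :: "('k::finite \<Rightarrow> real) \<Rightarrow> bool" where
  "wok w \<longleftrightarrow> (\<forall>k. 0 \<le> w k) \<and> sum w UNIV = 1"

lemma wok_nn: "wok w \<Longrightarrow> (\<integral>\<^sup>+k. ennreal (w k) \<partial>count_space UNIV) = 1"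
  unfolding wok_def by (simp add: nn_integral_count_space_finite)

lemma pmf_w: "wok w \<Longrightarrow> pmf (embed_pmf w) k = w k"
  using wok_nn[of w] by (subst pmf_embed_pmf) (auto simp: wok_def)

lemma fdist_distr: "wok w \<Longrightarrow> is_distribution (fdist w x)"
  unfolding is_distribution_def fdist_def
  by (auto intro!: measure_pmf.prob_space_distr)

lemma fdist_integral:
  fixes f :: "real ^ 'n \<Rightarrow> 'b::{banach, second_countable_topology}"
  assumes "wok w" "f \<in> borel_measurable borel"
  shows "integral\<^sup>L (fdist w x) f = (\<Sum>k\<in>UNIV. w k *\<^sub>R f (x k))"
  unfolding fdist_def
  by (subst integral_distr) (auto simp: assms integral_measure_pmf[of UNIV] pmf_w)

lemma fdist_integrable:
  fixes f :: "real ^ 'n \<Rightarrow> 'b::{banach, second_countable_topology}"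
  assumes "wok w" "f \<in> borel_measurable borel"
  shows "integrable (fdist w x) f"
  unfolding fdist_def
  by (subst integrable_distr_eq) (auto simp: assms intro!: integrable_measure_pmf_finite)

lemma fdist_measure:
  assumes "wok w" "S \<in> sets borel"
  shows "measure (fdist w x) S = (\<Sum>k\<in>UNIV. w k * indicator S (x k))"
proof -
  have "measure (fdist w x) S = integral\<^sup>L (fdist w x) (indicator S)"
    by (simp add: fdist_def)
  also have "\<dots> = (\<Sum>k\<in>UNIV. w k * indicator S (x k))"
    using assms by (subst fdist_integral) auto
  finally show ?thesis .
qed



lemma fdist_mean: "wok w \<Longrightarrow> dist_mean (fdist w x) = (\<Sum>k\<in>UNIV. w k *\<^sub>R x k)"
  unfolding dist_mean_def by (subst fdist_integral) auto

lemma fdist_cov_entry: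
  assumes "wok w"
  shows "dist_cov (fdist w x) $ a $ b =
    (\<Sum>k\<in>UNIV. w k * ((x k $ a - dist_mean (fdist w x) $ a) * (x k $ b - dist_mean (fdist w x) $ b)))"
  unfolding dist_cov_def using assms by (subst fdist_integral) auto

lemma fdist_quad:
  assumes "wok w"
  shows "u \<bullet> (dist_cov (fdist w x) *v u) =
     (\<Sum>k\<in>UNIV. w k * (u \<bullet> (x k - dist_mean (fdist w x)))\<^sup>2)"
proof -
  define m where "m = dist_mean (fdist w x)"
  have "u \<bullet> (dist_cov (fdist w x) *v u) =
     (\<Sum>a\<in>UNIV. u $ a * (\<Sum>b\<in>UNIV. (\<Sum>k\<in>UNIV. w k * ((x k $ a - m $ a) * (x k $ b - m $ b))) * u $ b))"
    by (simp add: inner_vec_def matrix_vector_mult_def fdist_cov_entry[OF assms] m_def)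
  also have "\<dots> = (\<Sum>k\<in>UNIV. w k * ((\<Sum>a\<in>UNIV. u $ a * (x k $ a - m $ a)) * (\<Sum>b\<in>UNIV. u $ b * (x k $ b - m $ b))))"
  proof -
    have "\<And>a. u $ a * (\<Sum>b\<in>UNIV. (\<Sum>k\<in>UNIV. w k * ((x k $ a - m $ a) * (x k $ b - m $ b))) * u $ b)
       = (\<Sum>k\<in>UNIV. w k * ((u $ a * (x k $ a - m $ a)) * (\<Sum>b\<in>UNIV. u $ b * (x k $ b - m $ b))))"
      by (simp add: sum_distrib_left sum_distrib_right mult_ac) (rule sum.swap)
    then have "(\<Sum>a\<in>UNIV. u $ a * (\<Sum>b\<in>UNIV. (\<Sum>k\<in>UNIV. w k * ((x k $ a - m $ a) * (x k $ b - m $ b))) * u $ b))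
       = (\<Sum>a\<in>UNIV. \<Sum>k\<in>UNIV. w k * ((u $ a * (x k $ a - m $ a)) * (\<Sum>b\<in>UNIV. u $ b * (x k $ b - m $ b))))"
      by simp
    also have "\<dots> = (\<Sum>k\<in>UNIV. \<Sum>a\<in>UNIV. w k * ((u $ a * (x k $ a - m $ a)) * (\<Sum>b\<in>UNIV. u $ b * (x k $ b - m $ b))))"
      by (rule sum.swap)
    also have "\<dots> = (\<Sum>k\<in>UNIV. w k * ((\<Sum>a\<in>UNIV. u $ a * (x k $ a - m $ a)) * (\<Sum>b\<in>UNIV. u $ b * (x k $ b - m $ b))))"
      by (simp add: sum_distrib_left sum_distrib_right mult_ac)
    finally show ?thesis .
  qed
  also have "\<dots> = (\<Sum>k\<in>UNIV. w k * (u \<bullet> (x k - m))\<^sup>2)"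
    by (simp add: inner_vec_def power2_eq_square)
  finally show ?thesis by (simp add: m_def)
qed

lemma smat_mult: "((c::real) *\<^sub>R mat 1) *v (u::real^'n) = c *\<^sub>R u"
  by (simp add: vec_eq_iff matrix_vector_mult_def mat_def if_distrib if_distribR cong: if_cong)

lemma var_le_second:
  fixes w :: "'k::finite \<Rightarrow> real"
  assumes "wok w" "c = (\<Sum>k\<in>UNIV. w k * a k)"
  shows "(\<Sum>k\<in>UNIV. w k * (a k - c)\<^sup>2) \<le> (\<Sum>k\<in>UNIV. w k * (a k)\<^sup>2)"
proof -
  have s1: "sum w UNIV = 1" using assms(1) by (simp add: wok_def)
  have "(\<Sum>k\<in>UNIV. w k * (a k - c)\<^sup>2) = (\<Sum>k\<in>UNIV. w k * (a k)\<^sup>2) - 2 * c * (\<Sum>k\<in>UNIV. w k * a k) + c\<^sup>2 * sum w UNIV"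
    by (simp add: power2_eq_square algebra_simps sum.distrib sum_subtractf sum_distrib_left sum_distrib_right)
  also have "\<dots> = (\<Sum>k\<in>UNIV. w k * (a k)\<^sup>2) - c\<^sup>2"
    using s1 assms(2) by (simp add: power2_eq_square)
  finally show ?thesis by simp
qed

lemma fdist_bounded_cov:
  assumes "wok w" "\<And>u. (\<Sum>k\<in>UNIV. w k * (u \<bullet> x k)\<^sup>2) \<le> \<sigma>\<^sup>2 * (u \<bullet> u)"
  shows "bounded_cov \<sigma> (fdist w x)"
  unfolding bounded_cov_def loewner_le_def
proof (intro conjI allI)
  show "is_distribution (fdist w x)" using assms(1) by (rule fdist_distr)
  show "integrable (fdist w x) (\<lambda>x. x)" using assms(1) by (rule fdist_integrable) auto
  show "integrable (fdist w x) (\<lambda>x. (norm x)\<^sup>2)" using assms(1) by (rule fdist_integrable) auto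
  fix u
  define m where "m = dist_mean (fdist w x)"
  have "u \<bullet> (dist_cov (fdist w x) *v u) = (\<Sum>k\<in>UNIV. w k * (u \<bullet> x k - u \<bullet> m)\<^sup>2)"
    by (simp add: fdist_quad[OF assms(1)] m_def inner_diff_right)
  also have "\<dots> \<le> (\<Sum>k\<in>UNIV. w k * (u \<bullet> x k)\<^sup>2)"
  proof (rule var_le_second[OF assms(1)])
    show "u \<bullet> m = (\<Sum>k\<in>UNIV. w k * (u \<bullet> x k))"
      by (simp add: m_def fdist_mean[OF assms(1)] inner_sum_right)
  qed
  also have "\<dots> \<le> \<sigma>\<^sup>2 * (u \<bullet> u)" by (rule assms(2))
  also have "\<dots> = u \<bullet> ((\<sigma>\<^sup>2 *\<^sub>R mat 1) *v u)"
  proof -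
    have "((\<sigma>\<^sup>2) *\<^sub>R mat 1) *v u = (\<sigma>\<^sup>2) *\<^sub>R u"
      by (simp add: vec_eq_iff matrix_vector_mult_def mat_def if_distrib if_distribR cong: if_cong)
    then show ?thesis by simp
  qed
  finally show "u \<bullet> (dist_cov (fdist w x) *v u) \<le> u \<bullet> ((\<sigma>\<^sup>2 *\<^sub>R mat 1) *v u)" .
qed



lemma sum_option: "(\<Sum>j\<in>(UNIV::'a::finite option set). f j) = f None + (\<Sum>k\<in>UNIV. f (Some k))"
  by (simp add: UNIV_option_conv sum.reindex)

lemma simplex_exists:
  "\<exists>v :: 'n::finite option \<Rightarrow> real ^ 'n. (\<forall>j. v j \<bullet> v j = real CARD('n)) \<and> (\<Sum>j\<in>UNIV. v j) = 0 \<and>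
      (\<forall>u. (\<Sum>j\<in>UNIV. (u \<bullet> v j)\<^sup>2) = (real CARD('n) + 1) * (u \<bullet> u))"
proof -
  define d where "d = real CARD('n)"
  have dpos: "d > 0" by (simp add: d_def)
  define \<alpha> where "\<alpha> = sqrt (d + 1)"
  define \<beta> where "\<beta> = (1 - \<alpha>) / d"
  have a2: "\<alpha>\<^sup>2 = d + 1" using dpos by (simp add: \<alpha>_def)
  have key: "2 * \<alpha> * \<beta> + d * \<beta>\<^sup>2 + 1 = 0"
  proof -
    have "2 * \<alpha> * \<beta> + d * \<beta>\<^sup>2 + 1 = (2 * \<alpha> * (1 - \<alpha>) * d + (1 - \<alpha>)\<^sup>2 * d + d * d) / (d * d)"
      using dpos by (simp add: \<beta>_def field_simps power2_eq_square)
    also have "2 * \<alpha> * (1 - \<alpha>) * d + (1 - \<alpha>)\<^sup>2 * d + d * d = d * (1 - \<alpha>\<^sup>2 + d)"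
      by (simp add: algebra_simps power2_eq_square)
    also have "\<dots> = 0" using a2 by simp
    finally show ?thesis by simp
  qed
  have lin: "\<alpha> + d * \<beta> = 1" using dpos by (simp add: \<beta>_def)
  define v :: "'n option \<Rightarrow> real ^ 'n" where
    "v j = (case j of None \<Rightarrow> (\<chi> l. -1) | Some k \<Rightarrow> (\<chi> l. (if l = k then \<alpha> else 0) + \<beta>))" for j
  have sumc: "(\<Sum>l\<in>(UNIV::'n set). c) = d * c" for c :: real by (simp add: d_def)
  have ip: "u \<bullet> v (Some k) = \<alpha> * u $ k + \<beta> * (\<Sum>l\<in>UNIV. u $ l)" for u k
  proof -
    have "u \<bullet> v (Some k) = (\<Sum>l\<in>UNIV. u $ l * (if l = k then \<alpha> else 0)) + (\<Sum>l\<in>UNIV. \<beta> * u $ l)"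
      by (simp add: v_def inner_vec_def distrib_left sum.distrib mult.commute)
    also have "(\<Sum>l\<in>UNIV. u $ l * (if l = k then \<alpha> else 0)) = (\<Sum>l\<in>UNIV. if l = k then \<alpha> * u $ k else 0)"
      by (rule sum.cong) auto
    finally show ?thesis by (simp add: sum_distrib_left)
  qed
  have ipN: "u \<bullet> v None = - (\<Sum>l\<in>UNIV. u $ l)" for u
    by (simp add: v_def inner_vec_def sum_negf)
  have "v j \<bullet> v j = d" for j
  proof (cases j)
    case None
    have "v None \<bullet> v None = - (\<Sum>l\<in>UNIV. v None $ l)" by (rule ipN)
    then show ?thesis using None by (simp add: v_def d_def)
  next
    case (Some k)
    have vs: "(\<Sum>l\<in>UNIV. v (Some k) $ l) = \<alpha> + d * \<beta>"
      using ip[of "\<chi> l. 1" k] by (simp add: inner_vec_def d_def)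
    have "v j \<bullet> v j = \<alpha> * (\<alpha> + \<beta>) + \<beta> * (\<alpha> + d * \<beta>)"
      using Some ip[of "v j" k] vs by (simp add: v_def)
    also have "\<dots> = \<alpha>\<^sup>2 + (2 * \<alpha> * \<beta> + d * \<beta>\<^sup>2)" by (simp add: algebra_simps power2_eq_square)
    also have "\<dots> = d" using a2 key by simp
    finally show ?thesis .
  qed
  moreover have "(\<Sum>j\<in>UNIV. v j) = 0"
  proof -
    have "(\<Sum>j\<in>UNIV. v j) $ l = 0" for l
    proof -
      have A: "(\<Sum>x\<in>UNIV. (if l = x then \<alpha> else 0) + \<beta>) = 1"
        using lin by (simp add: sum.distrib d_def)
      show ?thesis
        using A by (simp add: sum_option sum_component v_def)
    qed
    then show ?thesis by (simp add: vec_eq_iff)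
  qed
  moreover have "(\<Sum>j\<in>UNIV. (u \<bullet> v j)\<^sup>2) = (d + 1) * (u \<bullet> u)" for u
  proof -
    define s where "s = (\<Sum>l\<in>UNIV. u $ l)"
    have "(\<Sum>j\<in>UNIV. (u \<bullet> v j)\<^sup>2) = s\<^sup>2 + (\<Sum>k\<in>UNIV. (\<alpha> * u $ k + \<beta> * s)\<^sup>2)"
      by (simp add: sum_option ip ipN s_def)
    also have "(\<Sum>k\<in>UNIV. (\<alpha> * u $ k + \<beta> * s)\<^sup>2) = \<alpha>\<^sup>2 * (\<Sum>k\<in>UNIV. (u $ k)\<^sup>2) + 2 * \<alpha> * \<beta> * s * s + d * \<beta>\<^sup>2 * s\<^sup>2"
    proof -
      have "(\<Sum>k\<in>UNIV. (\<alpha> * u $ k + \<beta> * s)\<^sup>2) = (\<Sum>k\<in>UNIV. \<alpha>\<^sup>2 * (u $ k)\<^sup>2 + (2 * \<alpha> * \<beta> * s) * u $ k + \<beta>\<^sup>2 * s\<^sup>2)"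
        by (rule sum.cong) (auto simp: power2_eq_square algebra_simps)
      also have "\<dots> = \<alpha>\<^sup>2 * (\<Sum>k\<in>UNIV. (u $ k)\<^sup>2) + (2 * \<alpha> * \<beta> * s) * s + d * (\<beta>\<^sup>2 * s\<^sup>2)"
        by (simp add: sum.distrib sum_distrib_left[symmetric] s_def d_def)
      finally show ?thesis by (simp add: algebra_simps)
    qed
    also have "(\<Sum>k\<in>UNIV. (u $ k)\<^sup>2) = u \<bullet> u" by (simp add: inner_vec_def power2_eq_square)
    finally have "(\<Sum>j\<in>UNIV. (u \<bullet> v j)\<^sup>2) = \<alpha>\<^sup>2 * (u \<bullet> u) + (2 * \<alpha> * \<beta> + d * \<beta>\<^sup>2 + 1) * s\<^sup>2"
      by (simp add: algebra_simps power2_eq_square)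
    then show ?thesis using key a2 by simp
  qed
  ultimately show ?thesis unfolding d_def by blast
qed



lemma sum_pair_bool: "(\<Sum>p\<in>(UNIV::('a::finite \<times> bool) set). f p) = (\<Sum>j\<in>UNIV. f (j, True) + f (j, False))"
proof -
  have "(\<Sum>p\<in>(UNIV::('a \<times> bool) set). f p) = (\<Sum>p\<in>UNIV \<times> UNIV. f p)" by simp
  also have "\<dots> = (\<Sum>j\<in>UNIV. \<Sum>b\<in>UNIV. f (j, b))" unfolding sum.cartesian_product by simp
  also have "\<dots> = (\<Sum>j\<in>UNIV. f (j, True) + f (j, False))" by (simp add: UNIV_bool add.commute)
  finally show ?thesis .
qed

lemma sum_dist_lb:
  fixes \<mu> :: "'j::finite \<Rightarrow> real ^ 'n"
  assumes R: "R > 0" and n: "\<And>j. \<mu> j \<bullet> \<mu> j = R\<^sup>2" and s: "(\<Sum>j\<in>UNIV. \<mu> j) = 0"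
  shows "real CARD('j) * R \<le> (\<Sum>j\<in>UNIV. norm (y - \<mu> j))"
proof -
  have nm: "norm (\<mu> j) = R" for j using n[of j] R by (simp add: norm_eq_sqrt_inner)
  have each: "R\<^sup>2 - y \<bullet> \<mu> j \<le> R * norm (y - \<mu> j)" for j
  proof -
    have "R\<^sup>2 - y \<bullet> \<mu> j = (\<mu> j - y) \<bullet> \<mu> j" using n[of j] by (simp add: inner_diff_left)
    also have "\<dots> \<le> norm (\<mu> j - y) * norm (\<mu> j)" by (rule Cauchy_Schwarz_ineq2[THEN abs_le_D1])
    also have "\<dots> = R * norm (y - \<mu> j)" by (simp add: nm norm_minus_commute)
    finally show ?thesis .
  qed
  have "(\<Sum>j\<in>UNIV. R\<^sup>2 - y \<bullet> \<mu> j) \<le> (\<Sum>j\<in>UNIV. R * norm (y - \<mu> j))"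
    by (rule sum_mono) (rule each)
  moreover have "(\<Sum>j\<in>UNIV. R\<^sup>2 - y \<bullet> \<mu> j) = real CARD('j) * R\<^sup>2"
    by (simp add: sum_subtractf inner_sum_right[symmetric] s)
  ultimately have "R * (real CARD('j) * R) \<le> R * (\<Sum>j\<in>UNIV. norm (y - \<mu> j))"
    by (simp add: sum_distrib_left power2_eq_square mult_ac)
  then show ?thesis using R by simp
qed



lemma main_pos:
  fixes \<epsilon> :: real
    and A :: "real \<Rightarrow> real \<Rightarrow> (real ^ 'n) measure \<Rightarrow> (real ^ 'n) measure"
  assumes epos: "0 < \<epsilon>"
    and ele: "\<epsilon> \<le> 1 / (real CARD('n) + 1)"
    and Adist: "\<And>e s M. is_distribution (A e s M)"
  shows "\<exists>\<sigma> > 0. \<exists>D D'. bounded_cov \<sigma> D \<and> is_distribution D' \<and> tv_dist D D' \<le> \<epsilon> \<and>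
           alg_error A \<epsilon> \<sigma> D' (dist_mean D)
             \<ge> ennreal (jung_const CARD('n) * sqrt (2 * \<sigma>\<^sup>2 * \<epsilon>))"
proof -
  define d where "d = real CARD('n)"
  have dpos: "d > 0" by (simp add: d_def)
  obtain v :: "'n option \<Rightarrow> real ^ 'n" where
    vn: "\<And>j. v j \<bullet> v j = d" and vs: "(\<Sum>j\<in>UNIV. v j) = 0" and
    vf: "\<And>u. (\<Sum>j\<in>UNIV. (u \<bullet> v j)\<^sup>2) = (d + 1) * (u \<bullet> u)"
    using simplex_exists unfolding d_def by blast
  have cardo: "real CARD('n option) = d + 1" by (simp add: d_def card_UNIV_option)
  have e1: "(d + 1) * \<epsilon> \<le> 1" using ele dpos by (simp add: field_simps d_def)
  define x :: "('n option \<times> bool) option \<Rightarrow> real ^ 'n" where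
    "x k = (case k of None \<Rightarrow> 0 | Some (j, b) \<Rightarrow> if b then v j else - v j)" for k
  define w0 :: "('n option \<times> bool) option \<Rightarrow> real" where
    "w0 k = (case k of None \<Rightarrow> 1 - (d + 1) * \<epsilon> | Some (j, b) \<Rightarrow> if b then 0 else \<epsilon>)" for k
  define wi :: "'n option \<Rightarrow> ('n option \<times> bool) option \<Rightarrow> real" where
    "wi i k = (case k of None \<Rightarrow> 1 - (d + 1) * \<epsilon> | Some (j, b) \<Rightarrow>
        if j = i then (if b then \<epsilon> else 0) else (if b then 0 else \<epsilon>))" for i k
  have sumK: "(\<Sum>k\<in>UNIV. f k) = f None + (\<Sum>j\<in>UNIV. f (Some (j, True)) + f (Some (j, False)))"
    for f :: "('n option \<times> bool) option \<Rightarrow> 'b::comm_monoid_add"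
    by (simp add: sum_option sum_pair_bool)
  have ok0: "wok w0"
    unfolding wok_def using e1 epos by (auto simp: w0_def sumK cardo d_def split: option.splits)
  have oki: "wok (wi i)" for i
  proof -
    have "(\<Sum>j\<in>UNIV. (if j = i then \<epsilon> else 0) + (if j = i then 0 else \<epsilon>)) = (\<Sum>j\<in>(UNIV::'n option set). \<epsilon>)"
      by (rule sum.cong) auto
    then show ?thesis
      unfolding wok_def using e1 epos by (auto simp: wi_def sumK cardo d_def split: option.splits)
  qed
  define \<sigma> where "\<sigma> = sqrt (\<epsilon> * (d + 1))"
  have s2: "\<sigma>\<^sup>2 = \<epsilon> * (d + 1)" using epos dpos by (simp add: \<sigma>_def)
  have spos: "\<sigma> > 0" using epos dpos by (simp add: \<sigma>_def)
  define D' where "D' = fdist w0 x"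
  define Di where "Di i = fdist (wi i) x" for i
  have mean: "dist_mean (Di i) = (2 * \<epsilon>) *\<^sub>R v i" for i
  proof -
    have "dist_mean (Di i) = (\<Sum>j\<in>UNIV. (if j = i then (2 * \<epsilon>) *\<^sub>R v j else 0) - \<epsilon> *\<^sub>R v j)"
      unfolding Di_def fdist_mean[OF oki]
      by (simp add: sumK wi_def x_def) (rule sum.cong, auto simp: algebra_simps vec_eq_iff)
    also have "\<dots> = (2 * \<epsilon>) *\<^sub>R v i"
      by (simp add: sum_subtractf scaleR_sum_right[symmetric] vs vec_eq_iff)
    finally show ?thesis .
  qed
  have bc: "bounded_cov \<sigma> (Di i)" for i
    unfolding Di_def
  proof (rule fdist_bounded_cov[OF oki])
    fix u
    have "(\<Sum>k\<in>UNIV. wi i k * (u \<bullet> x k)\<^sup>2) = (\<Sum>j\<in>UNIV. \<epsilon> * (u \<bullet> v j)\<^sup>2)"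
      by (simp add: sumK wi_def x_def) (rule sum.cong, auto)
    also have "\<dots> = \<sigma>\<^sup>2 * (u \<bullet> u)" by (simp add: sum_distrib_left[symmetric] vf s2)
    finally show "(\<Sum>k\<in>UNIV. wi i k * (u \<bullet> x k)\<^sup>2) \<le> \<sigma>\<^sup>2 * (u \<bullet> u)" by simp
  qed
  have tv: "tv_dist (Di i) D' \<le> \<epsilon>" for i
    unfolding tv_dist_def
  proof (rule cSUP_least)
    show "sets borel \<noteq> {}" by auto
    fix S :: "(real ^ 'n) set" assume S: "S \<in> sets borel"
    have "measure (Di i) S - measure D' S = (\<Sum>k\<in>UNIV. (wi i k - w0 k) * indicator S (x k))"
      unfolding Di_def D'_def fdist_measure[OF oki S] fdist_measure[OF ok0 S]
      by (simp add: sum_subtractf algebra_simps)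
    also have "\<dots> = \<epsilon> * indicator S (v i) - \<epsilon> * indicator S (- v i)"
    proof -
      have pt: "(if j = i then \<epsilon> else 0) * indicat_real S (v j) + ((if j = i then 0 else \<epsilon>) - \<epsilon>) * indicat_real S (- v j)
          = (if j = i then \<epsilon> * indicator S (v i) - \<epsilon> * indicator S (- v i) else 0)" for j
        by auto
      show ?thesis by (simp add: sumK wi_def w0_def x_def pt)
    qed
    finally have eq: "measure (Di i) S - measure D' S = \<epsilon> * indicator S (v i) - \<epsilon> * indicator S (- v i)" .
    show "\<bar>measure (Di i) S - measure D' S\<bar> \<le> \<epsilon>"
      unfolding eq using epos by (auto simp: indicator_def)
  qed
  define P where "P = A \<epsilon> (\<sigma>\<^sup>2) D'"
  have Pd: "is_distribution P" unfolding P_def by (rule Adist)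
  then interpret P: prob_space P by (simp add: is_distribution_def)
  have Psets: "sets P = sets borel" using Pd by (simp add: is_distribution_def)
  define E where "E i = alg_error A \<epsilon> \<sigma> D' ((2 * \<epsilon>) *\<^sub>R v i)" for i
  have Eint: "E i = (\<integral>\<^sup>+ y. ennreal (norm (y - (2 * \<epsilon>) *\<^sub>R v i)) \<partial>P)" for i
    by (simp add: E_def alg_error_def P_def)
  define R where "R = 2 * \<epsilon> * sqrt d"
  have Rpos: "R > 0" using epos dpos by (simp add: R_def)
  have lbpt: "real CARD('n option) * R \<le> (\<Sum>j\<in>UNIV. norm (y - (2 * \<epsilon>) *\<^sub>R v j))" for y
  proof (rule sum_dist_lb[OF Rpos])
    show "((2 * \<epsilon>) *\<^sub>R v j) \<bullet> ((2 * \<epsilon>) *\<^sub>R v j) = R\<^sup>2" for j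
      using dpos by (simp add: vn R_def power2_eq_square)
    show "(\<Sum>j\<in>UNIV. (2 * \<epsilon>) *\<^sub>R v j) = 0" by (simp add: scaleR_sum_right[symmetric] vs)
  qed
  have meas: "(\<lambda>y. ennreal (norm (y - c))) \<in> borel_measurable P" for c :: "real ^ 'n"
    unfolding measurable_cong_sets[OF Psets refl] by measurable
  have "ennreal (real CARD('n option) * R) = (\<integral>\<^sup>+ y. ennreal (real CARD('n option) * R) \<partial>P)"
    by (simp add: P.emeasure_space_1)
  also have "\<dots> \<le> (\<integral>\<^sup>+ y. ennreal (\<Sum>j\<in>UNIV. norm (y - (2 * \<epsilon>) *\<^sub>R v j)) \<partial>P)"
    by (rule nn_integral_mono) (rule ennreal_leI, rule lbpt)
  also have "\<dots> = (\<integral>\<^sup>+ y. (\<Sum>j\<in>UNIV. ennreal (norm (y - (2 * \<epsilon>) *\<^sub>R v j))) \<partial>P)"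
    by simp
  also have "\<dots> = (\<Sum>j\<in>UNIV. E j)"
    unfolding Eint by (rule nn_integral_sum) (simp add: meas)
  finally have sumE: "ennreal (real CARD('n option) * R) \<le> (\<Sum>j\<in>UNIV. E j)" .
  obtain i0 where i0: "\<And>j. E j \<le> E i0"
  proof -
    have "Max (range E) \<in> range E" by (rule Max_in) auto
    then obtain i0 where "E i0 = Max (range E)" by (metis imageE)
    then show ?thesis using that by (metis Max_ge UNIV_I finite finite_imageI image_eqI)
  qed
  have "(\<Sum>j\<in>UNIV. E j) \<le> of_nat (card (UNIV :: 'n option set)) * E i0"
    by (rule sum_bounded_above) (rule i0)
  with sumE have "of_nat CARD('n option) * ennreal R \<le> of_nat CARD('n option) * E i0"
    using Rpos by (simp add: ennreal_mult ennreal_of_nat_eq_real_of_nat)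
  then have RE: "ennreal R \<le> E i0"
    by (subst (asm) ennreal_mult_le_mult_iff) auto
  have const: "jung_const CARD('n) * sqrt (2 * \<sigma>\<^sup>2 * \<epsilon>) = R"
  proof -
    have "jung_const CARD('n) * sqrt (2 * \<sigma>\<^sup>2 * \<epsilon>) = sqrt (2 * d / (d + 1) * (2 * (\<epsilon> * (d + 1)) * \<epsilon>))"
      by (simp add: jung_const_def d_def s2 real_sqrt_mult[symmetric])
    also have "2 * d / (d + 1) * (2 * (\<epsilon> * (d + 1)) * \<epsilon>) = (2 * \<epsilon>)\<^sup>2 * d"
      using dpos by (simp add: field_simps power2_eq_square)
    also have "sqrt \<dots> = R" using epos by (simp add: real_sqrt_mult R_def)
    finally show ?thesis .
  qed
  show ?thesis
  proof (intro exI conjI)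
    show "\<sigma> > 0" by (rule spos)
    show "bounded_cov \<sigma> (Di i0)" by (rule bc)
    show "is_distribution D'" unfolding D'_def by (rule fdist_distr[OF ok0])
    show "tv_dist (Di i0) D' \<le> \<epsilon>" by (rule tv)
    show "ennreal (jung_const CARD('n) * sqrt (2 * \<sigma>\<^sup>2 * \<epsilon>)) \<le> alg_error A \<epsilon> \<sigma> D' (dist_mean (Di i0))"
      using RE by (simp add: const mean E_def)
  qed
qed


theorem lemma21:
  fixes \<epsilon> :: real
    and A :: "real \<Rightarrow> real \<Rightarrow> (real ^ 'n) measure \<Rightarrow> (real ^ 'n) measure"
  assumes "0 \<le> \<epsilon>"
    and "\<epsilon> \<le> 1 / (real CARD('n) + 1)"
    and "\<And>e s M. is_distribution (A e s M)"
  shows "\<exists>\<sigma> > 0. \<exists>D D'. bounded_cov \<sigma> D \<and> is_distribution D' \<and> tv_dist D D' \<le> \<epsilon> \<and>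
           alg_error A \<epsilon> \<sigma> D' (dist_mean D)
             \<ge> ennreal (jung_const CARD('n) * sqrt (2 * \<sigma>\<^sup>2 * \<epsilon>))"
proof (cases "\<epsilon> = 0")
  case False
  then have "0 < \<epsilon>" using assms(1) by simp
  then show ?thesis by (rule main_pos[OF _ assms(2) assms(3)])
next
  case True
  define D :: "(real ^ 'n) measure" where "D = fdist (\<lambda>_::unit. 1) (\<lambda>_. 0)"
  have ok: "wok (\<lambda>_::unit. 1::real)" by (simp add: wok_def)
  have bc: "bounded_cov 1 D" unfolding D_def
    by (rule fdist_bounded_cov[OF ok]) simp
  have tv: "tv_dist D D \<le> 0" unfolding tv_dist_def
    by (rule cSUP_least) auto
  show ?thesis
  proof (intro exI conjI)
    show "(1::real) > 0" by simp
    show "bounded_cov 1 D" by (rule bc)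
    show "is_distribution D" unfolding D_def by (rule fdist_distr[OF ok])
    show "tv_dist D D \<le> \<epsilon>" using tv True by simp
    show "ennreal (jung_const CARD('n) * sqrt (2 * 1\<^sup>2 * \<epsilon>)) \<le> alg_error A \<epsilon> 1 D (dist_mean D)"
      using True by simp
  qed
qed

end
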